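(* Let $n_1, n_2 \ge 1$ and $n$ be integers with $n_1 + n_2 \le n$, and let $\lambda_1, \lambda_2 \ge 0$ and $Q \ge 1$ be reals. Let $P_1, P_2 \in \mathbb{Z}[x]$ with $\deg P_1 = n_1$, $H(P_1) \le Q^{\lambda_1}$, $\deg P_2 = n_2$, $H(P_2) \le Q^{\lambda_2}$, and suppose $P_1$ and $P_2$ have no common (complex) root. For $i = 1,2$ and $j \ge 0$ write $\bar P_i^{(j)}(x) = P_i^{(j)}(x)\, Q^{-\lambda_i}$ (with $\bar P_i^{(j)} = 0$ for $j<0$). (a) Let $\xi \in \left(-\tfrac12,\tfrac12\right)$ and let $k$ be an integer with $1 \le k \le n_1+n_2$. Define the $(n_1+n_2)\times k$ real matrix $M = (M_{r,s})$ by $M_{i,s} = |\bar P_1^{(s-i)}(\xi)|$ for $1 \le i \le n_2$, $1\le s\le k$, and $M_{n_2+i,s} = |\bar P_2^{(s-i)}(\xi)|$ for $1 \le i \le n_1$, $1 \le s \le k$ (so entries with $s<i$ are $0$). Let \[ \operatorname{perm} M = \sum_{\sigma} \prod_{s=1}^{k} M_{\sigma(s),s}, \] the sum being over all injective maps $\sigma : \{1,\dots,k\} \to \{1,\dots,n_1+n_2\}$. Then \[ 1 \le c(n)\, \operatorname{perm}(M)\, Q^{\,n_1\lambda_2 + n_2 \lambda_1}, \] where $c(n)>0$ depends only on $n$. (b) Suppose moreover that $n_1 + n_2 \ge 3$, and that there exist reals $\tau_1,\tau_2$, $\eta > 0$ and an interval $I \subseteq \left(-\tfrac12,\tfrac12\right)$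 of length $Q^{-\eta}$ such that $|P_i(\xi)| \le Q^{-\tau_i}$ for $i=1,2$ and all $\xi \in I$. Then for every $\delta > 0$ there is $Q_0(n,\delta)$ such that for all $Q > Q_0(n,\delta)$, \[ 3 \min\{\tau_1 + \lambda_1,\ \tau_2 + \lambda_2\} - 2\eta < n_1 \lambda_2 + n_2 \lambda_1 + \delta . \]
   Context: For a polynomial $P(x) = a_m x^m + \dots + a_0$, its height is $H(P) = \max_i |a_i|$. $P^{(j)}$ denotes the $j$-th derivative, $P^{(0)} = P$. *)

theory Defs
  imports "HOL-Analysis.Analysis" "HOL-Computational_Algebra.Polynomial" "HOL-Library.FuncSet"
begin

definition height :: "int poly \<Rightarrow> int" where
  "height P = Max ((\<lambda>i. \<bar>coeff P i\<bar>) ` {0..degree P})"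

definition pbar :: "int poly \<Rightarrow> real \<Rightarrow> real \<Rightarrow> int \<Rightarrow> real \<Rightarrow> real" where
  "pbar P lam Q j x =
     (if j < 0 then 0
      else poly (map_poly real_of_int ((pderiv ^^ nat j) P)) x * Q powr (- lam))"

text \<open>The (n1+n2) x k matrix M of part (a), rows and columns indexed from 1.\<close>
definition matM :: "nat \<Rightarrow> nat \<Rightarrow> int poly \<Rightarrow> int poly \<Rightarrow> real \<Rightarrow> real \<Rightarrow> real \<Rightarrow> real
                     \<Rightarrow> nat \<Rightarrow> nat \<Rightarrow> real" where
  "matM n1 n2 P1 P2 lam1 lam2 Q \<xi> r s =
     (if r \<le> n2 then \<bar>pbar P1 lam1 Q (int s - int r) \<xi>\<bar>
      else \<bar>pbar P2 lam2 Q (int s - int (r - n2)) \<xi>\<bar>)"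

definition perm_rect :: "nat \<Rightarrow> nat \<Rightarrow> (nat \<Rightarrow> nat \<Rightarrow> real) \<Rightarrow> real" where
  "perm_rect N k M =
     (\<Sum>\<sigma> \<in> {\<sigma>. \<sigma> \<in> {1..k} \<rightarrow>\<^sub>E {1..N} \<and> inj_on \<sigma> {1..k}}. \<Prod>s=1..k. M (\<sigma> s) s)"

end

theory Submission imports Defs "Subresultants.Resultant_Prelim" "HOL-Computational_Algebra.Fundamental_Theorem_Algebra" "HOL-Computational_Algebra.Field_as_Ring" begin

lemma height_nonneg: "0 \<le> height P"
  unfolding height_def by (rule order.trans[OF abs_ge_zero Max_ge[of _ "\<bar>coeff P 0\<bar>"]]) auto

lemma coeff_le_height: "\<bar>coeff P i\<bar> \<le> height P"
proof (cases "i \<le> degree P")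
  case True thus ?thesis unfolding height_def by (intro Max_ge) auto
next
  case False thus ?thesis using height_nonneg[of P] by (simp add: coeff_eq_0)
qed

lemma degree_higher_pderiv_le: "degree ((pderiv ^^ j) (p::real poly)) \<le> degree p"
  by (induction j) (auto simp: degree_pderiv)

lemma pcompose_x_power: "([:0, 1:] ^ b) \<circ>\<^sub>p r = (r :: 'a :: comm_semiring_1 poly) ^ b"
  by (induction b) (auto simp: pcompose_mult pcompose_pCons pcompose_1)

lemma coeff_higher_pderiv_bound:
  fixes p :: "real poly"
  assumes "\<And>i. \<bar>coeff p i\<bar> \<le> H"
  shows "\<bar>coeff ((pderiv ^^ j) p) i\<bar> \<le> real (degree p) ^ j * H"
proof (induction j arbitrary: i)
  case 0 thus ?case using assms by simp
next
  case (Suc j)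
  have "coeff ((pderiv ^^ Suc j) p) i = of_nat (Suc i) * coeff ((pderiv ^^ j) p) (Suc i)"
    by (simp add: coeff_pderiv)
  show ?case
  proof (cases "Suc i \<le> degree p")
    case True
    have "\<bar>coeff ((pderiv ^^ Suc j) p) i\<bar> = real (Suc i) * \<bar>coeff ((pderiv ^^ j) p) (Suc i)\<bar>"
      by (simp add: coeff_pderiv abs_mult)
    also have "\<dots> \<le> real (degree p) * (real (degree p) ^ j * H)"
      using True Suc[of "Suc i"] by (intro mult_mono) auto
    finally show ?thesis by simp
  next
    case False
    hence "coeff ((pderiv ^^ j) p) (Suc i) = 0"
      using degree_higher_pderiv_le[of j p] by (intro coeff_eq_0) auto
    moreover have "0 \<le> real (degree p) ^ Suc j * H"
      using assms[of 0] by simp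
    ultimately show ?thesis by (simp add: coeff_pderiv)
  qed
qed

lemma poly_higher_pderiv_bound:
  fixes p :: "real poly"
  assumes "\<And>i. \<bar>coeff p i\<bar> \<le> H" "\<bar>x\<bar> \<le> 1"
  shows "\<bar>poly ((pderiv ^^ j) p) x\<bar> \<le> real (degree p + 1) * real (degree p) ^ j * H"
proof -
  let ?q = "(pderiv ^^ j) p"
  have "\<bar>poly ?q x\<bar> \<le> (\<Sum>i\<le>degree ?q. \<bar>coeff ?q i * x ^ i\<bar>)"
    unfolding poly_altdef by (rule sum_abs)
  also have "\<dots> \<le> (\<Sum>i\<le>degree p. \<bar>coeff ?q i * x ^ i\<bar>)"
    by (rule sum_mono2) (auto simp: degree_higher_pderiv_le)
  also have "\<dots> \<le> (\<Sum>i\<le>degree p. real (degree p) ^ j * H)"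
  proof (rule sum_mono)
    fix i
    have "\<bar>coeff ?q i * x ^ i\<bar> = \<bar>coeff ?q i\<bar> * \<bar>x\<bar> ^ i" by (simp add: abs_mult power_abs)
    also have "\<dots> \<le> (real (degree p) ^ j * H) * 1"
      using coeff_higher_pderiv_bound[OF assms(1)] assms(2) order.trans[OF abs_ge_zero assms(1)[of 0]]
      by (intro mult_mono) (auto simp: power_le_one)
    finally show "\<bar>coeff ?q i * x ^ i\<bar> \<le> real (degree p) ^ j * H" by simp
  qed
  also have "\<dots> = real (degree p + 1) * real (degree p) ^ j * H" by simp
  finally show ?thesis .
qed

lemma coeff_higher_pderiv:
  fixes R :: "real poly"
  shows "coeff ((pderiv ^^ j) R) i = pochhammer (real (Suc i)) j * coeff R (i + j)"
proof (induction j arbitrary: i)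
  case 0 thus ?case by simp
next
  case (Suc j)
  have "coeff ((pderiv ^^ Suc j) R) i = real (Suc i) * coeff ((pderiv ^^ j) R) (Suc i)"
    by (simp add: coeff_pderiv)
  also have "\<dots> = real (Suc i) * (pochhammer (real (Suc (Suc i))) j * coeff R (Suc i + j))"
    using Suc by simp
  also have "\<dots> = pochhammer (real (Suc i)) (Suc j) * coeff R (i + Suc j)"
    by (simp add: pochhammer_rec)
  finally show ?case .
qed

lemma higher_pderiv_pcompose_shift:
  fixes p :: "real poly"
  shows "(pderiv ^^ j) (p \<circ>\<^sub>p [:x0, 1:]) = ((pderiv ^^ j) p) \<circ>\<^sub>p [:x0, 1:]"
  by (induction j) (auto simp: pderiv_pcompose pderiv_pCons)

lemma taylor_coeff:
  fixes p :: "real poly"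
  shows "coeff (p \<circ>\<^sub>p [:x0, 1:]) j * fact j = poly ((pderiv ^^ j) p) x0"
proof -
  have "poly ((pderiv ^^ j) p) x0 = coeff ((pderiv ^^ j) (p \<circ>\<^sub>p [:x0, 1:])) 0"
    by (simp add: higher_pderiv_pcompose_shift coeff_pcompose_0)
  also have "\<dots> = pochhammer 1 j * coeff (p \<circ>\<^sub>p [:x0, 1:]) j"
    by (simp add: coeff_higher_pderiv)
  finally show ?thesis by (simp add: pochhammer_fact)
qed

lemma pcompose_expand:
  fixes p r :: "real poly"
  assumes "degree p < N"
  shows "coeff (p \<circ>\<^sub>p r) c = (\<Sum>b<N. coeff p b * coeff (r ^ b) c)"
proof -
  have "p \<circ>\<^sub>p r = (\<Sum>b\<le>degree p. monom (coeff p b) b) \<circ>\<^sub>p r"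
    by (simp add: poly_as_sum_of_monoms)
  also have "\<dots> = (\<Sum>b\<le>degree p. Polynomial.smult (coeff p b) (r ^ b))"
    by (simp add: pcompose_sum pcompose_smult monom_altdef pcompose_x_power)
  finally have "coeff (p \<circ>\<^sub>p r) c = (\<Sum>b\<le>degree p. coeff p b * coeff (r ^ b) c)"
    by (simp add: coeff_sum)
  also have "\<dots> = (\<Sum>b<N. coeff p b * coeff (r ^ b) c)"
    using assms by (intro sum.mono_neutral_left) (auto simp: coeff_eq_0)
  finally show ?thesis .
qed


interpretation creal_poly_hom: map_poly_comm_semiring_hom "of_real :: real \<Rightarrow> complex" ..

lemma map_real_complex_int: "map_poly complex_of_real (of_int_poly P :: real poly) = of_int_poly P"
  by (simp add: map_poly_map_poly o_def)

lemma coprime_real: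
  fixes P1 P2 :: "int poly"
  assumes nz: "P1 \<noteq> 0"
    and nc: "\<not> (\<exists>z::complex. poly (of_int_poly P1) z = 0 \<and> poly (of_int_poly P2) z = 0)"
  shows "coprime (of_int_poly P1 :: real poly) (of_int_poly P2)"
proof -
  define p1 :: "real poly" where "p1 = of_int_poly P1"
  define p2 :: "real poly" where "p2 = of_int_poly P2"
  define g where "g = gcd p1 p2"
  have p1nz: "p1 \<noteq> 0" using nz unfolding p1_def by simp
  hence gnz: "g \<noteq> 0" unfolding g_def by simp
  have "degree g = 0"
  proof (rule ccontr)
    assume "degree g \<noteq> 0"
    hence "degree (map_poly complex_of_real g) \<noteq> 0" by simp
    hence "\<not> constant (poly (map_poly complex_of_real g))" by (simp add: constant_degree)
    then obtain z where z: "poly (map_poly complex_of_real g) z = 0"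
      using fundamental_theorem_of_algebra by blast
    have "g dvd p1" "g dvd p2" unfolding g_def by auto
    then obtain k1 k2 where k: "p1 = g * k1" "p2 = g * k2" by (auto elim!: dvdE)
    have "poly (map_poly complex_of_real p1) z = 0" "poly (map_poly complex_of_real p2) z = 0"
      unfolding k by (simp_all add: creal_poly_hom.hom_mult z)
    hence "poly (of_int_poly P1) z = 0 \<and> poly (of_int_poly P2) z = 0"
      unfolding p1_def p2_def map_real_complex_int by simp
    with nc show False by blast
  qed
  hence "is_unit g" using is_unit_iff_degree[OF gnz] by simp
  thus ?thesis unfolding g_def p1_def p2_def is_unit_gcd .
qed

definition ii :: "nat \<Rightarrow> nat \<Rightarrow> nat" where "ii n2 r = (if r < n2 then r else r - n2)"
definition selp :: "nat \<Rightarrow> 'a \<Rightarrow> 'a \<Rightarrow> nat \<Rightarrow> 'a" where "selp n2 a b r = (if r < n2 then a else b)"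

lemma sum_split_blocks: "(\<Sum>r<(n1::nat)+n2. f r) = (\<Sum>r<n2. f r) + (\<Sum>t<n1. f (n2+t))"
  by (induction n1) (auto simp: add.commute add.left_commute)

lemma coeff_monom_sum: "coeff (\<Sum>r<m. monom (f r) r) t = (if t < m then f t else 0)"
  by (simp add: coeff_sum coeff_monom)

lemma sylv_nonsing:
  fixes p1 p2 :: "real poly"
  assumes d1: "degree p1 = n1" and d2: "degree p2 = n2" and n1: "n1 \<ge> 1" and cop: "coprime p1 p2"
  shows "Determinant.det (Matrix.mat (n1+n2) (n1+n2) (\<lambda>(r,b). coeff (monom 1 (ii n2 r) * selp n2 p1 p2 r) b)) \<noteq> 0"
    (is "Determinant.det ?S \<noteq> 0")
proof
  let ?N = "n1+n2"
  assume "Determinant.det ?S = 0"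
  hence "Determinant.det (transpose_mat ?S) = 0" by (subst det_transpose) auto
  then obtain v where v: "v \<in> carrier_vec ?N" "v \<noteq> 0\<^sub>v ?N" "transpose_mat ?S *\<^sub>v v = 0\<^sub>v ?N"
    using det_0_iff_vec_prod_zero_field[of "transpose_mat ?S" ?N] by auto
  define A where "A = (\<Sum>r<n2. monom (v $ r) r)"
  define B where "B = (\<Sum>t<n1. monom (v $ (n2+t)) t)"
  have cA: "coeff A t = (if t < n2 then v $ t else 0)" for t unfolding A_def coeff_monom_sum ..
  have cB: "coeff B t = (if t < n1 then v $ (n2+t) else 0)" for t unfolding B_def coeff_monom_sum ..
  have key: "coeff (A * p1 + B * p2) b = (\<Sum>r<?N. v $ r * coeff (monom 1 (ii n2 r) * selp n2 p1 p2 r) b)" for b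
  proof -
    have "coeff (A * p1 + B * p2) b = (\<Sum>r<n2. v $ r * coeff (monom 1 r * p1) b) + (\<Sum>t<n1. v $ (n2+t) * coeff (monom 1 t * p2) b)"
      unfolding A_def B_def by (simp add: sum_distrib_right coeff_sum coeff_monom_mult) (auto intro!: sum.cong arg_cong2[where f="(+)"])
    also have "\<dots> = (\<Sum>r<?N. v $ r * coeff (monom 1 (ii n2 r) * selp n2 p1 p2 r) b)"
      unfolding sum_split_blocks by (simp add: ii_def selp_def)
    finally show ?thesis .
  qed
  have z: "A * p1 + B * p2 = 0"
  proof (rule poly_eqI)
    fix b
    show "coeff (A * p1 + B * p2) b = coeff 0 b"
    proof (cases "b < ?N")
      case True
      have "(transpose_mat ?S *\<^sub>v v) $ b = 0" using v(3) True by simp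
      hence "(\<Sum>r<?N. ?S $$ (r, b) * v $ r) = 0"
        using True v(1) by (simp add: scalar_prod_def atLeast0LessThan)
      hence "(\<Sum>r<?N. v $ r * coeff (monom 1 (ii n2 r) * selp n2 p1 p2 r) b) = 0"
        using True by (simp add: mult.commute)
      thus ?thesis using key by simp
    next
      case False
      have "coeff (monom 1 (ii n2 r) * selp n2 p1 p2 r) b = 0" if "r < ?N" for r
        using that False d1 d2 by (auto simp: coeff_monom_mult ii_def selp_def intro!: coeff_eq_0)
      thus ?thesis using key by simp
    qed
  qed
  have p1nz: "p1 \<noteq> 0" using d1 n1 by auto
  show False
  proof (cases "B = 0")
    case True
    with z have "A * p1 = 0" by simp
    with p1nz have "A = 0" by simp
    have "v = 0\<^sub>v ?N"
    proof (rule eq_vecI)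
      fix i assume i: "i < dim_vec (0\<^sub>v ?N)"
      show "v $ i = 0\<^sub>v ?N $ i"
      proof (cases "i < n2")
        case True thus ?thesis using cA[of i] \<open>A = 0\<close> i by simp
      next
        case False
        have "i - n2 < n1" using i False by simp
        hence "v $ (n2 + (i - n2)) = 0" using cB[of "i - n2"] \<open>B = 0\<close> by simp
        moreover have "n2 + (i - n2) = i" using False by simp
        ultimately show ?thesis using i by simp
      qed
    qed (use v(1) in auto)
    with v(2) show False by simp
  next
    case False
    have "B * p2 = p1 * (- A)" using z by (simp add: algebra_simps eq_neg_iff_add_eq_0)
    hence "p1 dvd B * p2" by simp
    hence "p1 dvd B" using cop by (simp add: coprime_dvd_mult_left_iff)
    hence "degree p1 \<le> degree B" using False by (rule dvd_imp_degree_le)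
    moreover have "degree B \<le> n1 - 1" by (rule degree_le) (auto simp: cB)
    ultimately show False using d1 n1 by simp
  qed
qed

lemma sum_if_le:
  assumes "m < (M::nat)"
  shows "(\<Sum>a<M. if a \<le> m then f a else 0) = (\<Sum>a\<le>m. f a)"
proof -
  have "(\<Sum>a<M. if a \<le> m then f a else 0) = sum f {a\<in>{..<M}. a \<le> m}" by (simp add: sum.inter_filter[symmetric])
  also have "{a\<in>{..<M}. a \<le> m} = {..m}" using assms by auto
  finally show ?thesis .
qed

lemma coeff_mult_expand:
  fixes u p :: "real poly"
  assumes "degree u \<le> m"
  shows "coeff (u * p) b = (\<Sum>a\<le>m. coeff u a * coeff (monom 1 a * p) b)"
proof -
  have "u * p = (\<Sum>a\<le>degree u. monom (coeff u a) a) * p" by (simp add: poly_as_sum_of_monoms)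
  hence "coeff (u * p) b = (\<Sum>a\<le>degree u. coeff u a * coeff (monom 1 a * p) b)"
    by (simp add: sum_distrib_right coeff_sum coeff_monom_mult) (auto intro!: sum.cong)
  also have "\<dots> = (\<Sum>a\<le>m. coeff u a * coeff (monom 1 a * p) b)"
    using assms by (intro sum.mono_neutral_left) (auto simp: coeff_eq_0)
  finally show ?thesis .
qed

lemma degree_linear_power: "degree ([:-x0, 1:] ^ i :: real poly) = i"
  by (simp add: degree_power_eq)

lemma main_det:
  fixes p1 p2 :: "real poly" and w :: "nat \<Rightarrow> nat \<Rightarrow> real" and n1 n2 :: nat
  defines "N \<equiv> n1 + n2"
  assumes d1: "degree p1 = n1" and d2: "degree p2 = n2"
    and S0: "1 \<le> \<bar>Determinant.det (Matrix.mat N N (\<lambda>(r,b). coeff (monom 1 (ii n2 r) * selp n2 p1 p2 r) b))\<bar>"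
    and w0: "\<And>b c. b < c \<Longrightarrow> c < N \<Longrightarrow> w c b = 0" and w1: "\<And>c. c < N \<Longrightarrow> w c c = 1"
  shows "1 \<le> (\<Sum>q\<in>{q. q permutes {0..<N}}. \<Prod>c<N.
           \<bar>\<Sum>b<N. coeff ([:-x0, 1:] ^ (ii n2 (q c)) * selp n2 p1 p2 (q c)) b * w c b\<bar>)"
proof -
  define S where "S = Matrix.mat N N (\<lambda>(r,b). coeff (monom 1 (ii n2 r) * selp n2 p1 p2 r) b)"
  define U :: "real mat" where "U = Matrix.mat N N (\<lambda>(r,a). if (a < n2 \<longleftrightarrow> r < n2) \<and> ii n2 a \<le> ii n2 r
      then coeff ([:-x0, 1:] ^ (ii n2 r)) (ii n2 a) else 0)"
  define E :: "real mat" where "E = Matrix.mat N N (\<lambda>(b,c). w c b)"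
  define G where "G = U * S * E"
  define rp where "rp r = [:-x0, 1:] ^ (ii n2 r) * selp n2 p1 p2 r" for r
  have SC: "S \<in> carrier_mat N N" and UC: "U \<in> carrier_mat N N" and EC: "E \<in> carrier_mat N N"
    unfolding S_def U_def E_def by auto
  have detU: "Determinant.det U = 1"
  proof -
    have "Determinant.det U = prod_list (diag_mat U)"
    proof (rule det_lower_triangular[OF _ UC])
      fix i j assume "i < j" "j < N"
      thus "U $$ (i, j) = 0" unfolding U_def by (auto simp: ii_def)
    qed
    also have "diag_mat U = replicate N 1"
      unfolding U_def diag_mat_def by (auto intro!: nth_equalityI simp: coeff_linear_power)
    finally show ?thesis by simp
  qed
  have detE: "Determinant.det E = 1"
  proof -
    have "Determinant.det E = prod_list (diag_mat E)"
    proof (rule det_lower_triangular[OF _ EC])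
      fix i j assume "i < j" "j < N"
      thus "E $$ (i, j) = 0" unfolding E_def by (auto simp: w0)
    qed
    also have "diag_mat E = replicate N 1"
      unfolding E_def diag_mat_def by (auto intro!: nth_equalityI simp: w1)
    finally show ?thesis by simp
  qed
  have detG: "Determinant.det G = Determinant.det S"
    unfolding G_def using UC SC EC detU detE
    by (simp add: det_mult[of _ N])
  have US: "(U * S) $$ (r, b) = coeff (rp r) b" if r: "r < N" and b: "b < N" for r b
  proof -
    have "(U * S) $$ (r, b) = (\<Sum>a<N. U $$ (r, a) * S $$ (a, b))"
      using r b UC SC by (simp add: scalar_prod_def atLeast0LessThan)
    also have "\<dots> = (\<Sum>a<n2. U $$ (r, a) * S $$ (a, b)) + (\<Sum>t<n1. U $$ (r, n2+t) * S $$ (n2+t, b))"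
      unfolding N_def sum_split_blocks ..
    also have "\<dots> = coeff (rp r) b"
    proof (cases "r < n2")
      case True
      have "(\<Sum>a<n2. U $$ (r, a) * S $$ (a, b)) = (\<Sum>a<n2. if a \<le> r then coeff ([:-x0, 1:] ^ r) a * coeff (monom 1 a * p1) b else 0)"
        using True r b unfolding U_def S_def N_def by (intro sum.cong) (auto simp: ii_def selp_def)
      also have "\<dots> = (\<Sum>a\<le>r. coeff ([:-x0, 1:] ^ r) a * coeff (monom 1 a * p1) b)"
        using True by (rule sum_if_le)
      also have "\<dots> = coeff (rp r) b"
        unfolding rp_def using True by (simp add: ii_def selp_def coeff_mult_expand[OF eq_imp_le[OF degree_linear_power]])
      finally show ?thesis using True unfolding U_def N_def by (simp add: ii_def)
    next
      case False
      let ?m = "r - n2"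
      have m: "?m < n1" using False r unfolding N_def by simp
      have "(\<Sum>t<n1. U $$ (r, n2+t) * S $$ (n2+t, b)) = (\<Sum>t<n1. if t \<le> ?m then coeff ([:-x0, 1:] ^ ?m) t * coeff (monom 1 t * p2) b else 0)"
        using False r b unfolding U_def S_def N_def by (intro sum.cong) (auto simp: ii_def selp_def)
      also have "\<dots> = (\<Sum>t\<le>?m. coeff ([:-x0, 1:] ^ ?m) t * coeff (monom 1 t * p2) b)"
        using m by (rule sum_if_le)
      also have "\<dots> = coeff (rp r) b"
        unfolding rp_def using False by (simp add: ii_def selp_def coeff_mult_expand[OF eq_imp_le[OF degree_linear_power]])
      finally show ?thesis using False r unfolding U_def N_def by (simp add: ii_def)
    qed
    finally show ?thesis .
  qed
  have Gent: "G $$ (r, c) = (\<Sum>b<N. coeff (rp r) b * w c b)" if r: "r < N" and c: "c < N" for r c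
  proof -
    have "G $$ (r, c) = (\<Sum>b<N. (U * S) $$ (r, b) * E $$ (b, c))"
      unfolding G_def using r c UC SC EC by (simp add: scalar_prod_def atLeast0LessThan del: assoc_mult_mat)
    also have "\<dots> = (\<Sum>b<N. coeff (rp r) b * w c b)"
      using r c by (intro sum.cong) (auto simp: US E_def)
    finally show ?thesis .
  qed
  have GC: "G \<in> carrier_mat N N" unfolding G_def using UC SC EC by auto
  have "Determinant.det G = Determinant.det (transpose_mat G)" using det_transpose[OF GC] by simp
  also have "\<dots> = (\<Sum>p\<in>{p. p permutes {0..<N}}. signof p * (\<Prod>i=0..<N. G $$ (p i, i)))"
    using GC by (subst det_def'[of _ N]) (auto intro!: sum.cong prod.cong simp: permutes_in_image)
  finally have "\<bar>Determinant.det G\<bar> \<le> (\<Sum>p\<in>{p. p permutes {0..<N}}. \<bar>signof p * (\<Prod>i=0..<N. G $$ (p i, i))\<bar>)"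
    by (simp add: sum_abs)
  also have "\<dots> = (\<Sum>q\<in>{q. q permutes {0..<N}}. \<Prod>c<N. \<bar>\<Sum>b<N. coeff (rp (q c)) b * w c b\<bar>)"
  proof (intro sum.cong refl)
    fix p assume p: "p \<in> {p. p permutes {0..<N}}"
    have "\<bar>signof p * (\<Prod>i=0..<N. G $$ (p i, i))\<bar> = (\<Prod>i=0..<N. \<bar>G $$ (p i, i)\<bar>)"
      by (simp add: abs_mult abs_prod sign_def)
    also have "\<dots> = (\<Prod>c<N. \<bar>\<Sum>b<N. coeff (rp (p c)) b * w c b\<bar>)"
      using p by (auto simp: atLeast0LessThan Gent permutes_in_image intro!: prod.cong)
    finally show "\<bar>signof p * (\<Prod>i=0..<N. G $$ (p i, i))\<bar> = (\<Prod>c<N. \<bar>\<Sum>b<N. coeff (rp (p c)) b * w c b\<bar>)" .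
  qed
  finally have "\<bar>Determinant.det S\<bar> \<le> (\<Sum>q\<in>{q. q permutes {0..<N}}. \<Prod>c<N. \<bar>\<Sum>b<N. coeff (rp (q c)) b * w c b\<bar>)"
    using detG by simp
  with S0 show ?thesis unfolding S_def rp_def by simp
qed

lemma S0_int:
  fixes P1 P2 :: "int poly" and n1 n2 :: nat
  assumes d1: "degree P1 = n1" and d2: "degree P2 = n2" and n1: "n1 \<ge> 1"
    and nc: "\<not> (\<exists>z::complex. poly (of_int_poly P1) z = 0 \<and> poly (of_int_poly P2) z = 0)"
  shows "1 \<le> \<bar>Determinant.det (Matrix.mat (n1+n2) (n1+n2) (\<lambda>(r,b). coeff (monom 1 (ii n2 r) *
            selp n2 (of_int_poly P1 :: real poly) (of_int_poly P2) r) b))\<bar>"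
    (is "1 \<le> \<bar>Determinant.det ?S\<bar>")
proof -
  define Si :: "int mat" where "Si = Matrix.mat (n1+n2) (n1+n2) (\<lambda>(r,b). coeff (monom 1 (ii n2 r) * selp n2 P1 P2 r) b)"
  have "map_mat of_int Si = ?S"
    unfolding Si_def by (rule eq_matI) (auto simp: coeff_monom_mult selp_def)
  hence eq: "Determinant.det ?S = of_int (Determinant.det Si)"
    by (metis of_int_hom.hom_det)
  have "P1 \<noteq> 0" using d1 n1 by auto
  have "Determinant.det ?S \<noteq> 0"
    by (rule sylv_nonsing) (use d1 d2 n1 coprime_real[OF \<open>P1 \<noteq> 0\<close> nc] in auto)
  hence "Determinant.det Si \<noteq> 0" using eq by auto
  hence "1 \<le> \<bar>Determinant.det Si\<bar>" by linarith
  thus ?thesis unfolding eq by linarith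
qed

lemma pcompose_power_left': "(q ^ i) \<circ>\<^sub>p r = (q \<circ>\<^sub>p r) ^ i"
  by (induction i) (auto simp: pcompose_mult pcompose_1)

lemma rp_shift:
  fixes p :: "real poly"
  shows "coeff (([:-x0, 1:] ^ i * p) \<circ>\<^sub>p [:x0, 1:]) c = (if c < i then 0 else coeff (p \<circ>\<^sub>p [:x0, 1:]) (c - i))"
proof -
  have "[:-x0, 1:] \<circ>\<^sub>p [:x0, 1:] = [:0, 1:]" by (simp add: pcompose_pCons)
  hence "([:-x0, 1:] ^ i * p) \<circ>\<^sub>p [:x0, 1:] = monom 1 i * (p \<circ>\<^sub>p [:x0, 1:])"
    by (simp add: pcompose_mult pcompose_power_left' monom_altdef)
  thus ?thesis by (simp add: coeff_monom_mult)
qed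

lemma degree_rp:
  assumes "r < n1 + n2" "degree (p1::real poly) = n1" "degree (p2::real poly) = n2"
  shows "degree ([:-x0, 1:] ^ (ii n2 r) * selp n2 p1 p2 r) < n1 + n2"
proof -
  have "degree ([:-x0, 1:] ^ (ii n2 r) * selp n2 p1 p2 r) \<le> ii n2 r + degree (selp n2 p1 p2 r)"
    using degree_mult_le[of "[:-x0, 1:] ^ (ii n2 r)" "selp n2 p1 p2 r"] by (simp add: degree_linear_power)
  also have "\<dots> < n1 + n2" using assms by (auto simp: ii_def selp_def)
  finally show ?thesis .
qed

lemma taylor_weights:
  assumes "b < c"
  shows "coeff ([:x0, 1:] ^ b :: real poly) c = 0"
proof -
  have "degree ([:x0, 1:] ^ b :: real poly) = b" by (simp add: degree_power_eq)
  thus ?thesis using assms by (intro coeff_eq_0) auto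
qed

lemma pbar_bound:
  fixes P :: "int poly"
  assumes "degree P \<le> n" "real_of_int (height P) \<le> Q powr lam" "Q > 0" "\<bar>x\<bar> \<le> 1" "j \<le> int n" "n \<ge> 1"
  shows "\<bar>pbar P lam Q j x\<bar> \<le> real (n + 1) * real n ^ n"
proof (cases "j < 0")
  case True thus ?thesis by (simp add: pbar_def)
next
  case False
  define p :: "real poly" where "p = of_int_poly P"
  have cp: "\<bar>coeff p i\<bar> \<le> real_of_int (height P)" for i
    unfolding p_def using coeff_le_height[of P i] by (simp add: coeff_map_poly)
  have dp: "degree p = degree P" unfolding p_def by simp
  have "\<bar>poly ((pderiv ^^ nat j) p) x\<bar> \<le> real (degree p + 1) * real (degree p) ^ nat j * real_of_int (height P)"
    by (rule poly_higher_pderiv_bound[OF cp assms(4)])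
  also have "\<dots> \<le> real (n + 1) * real n ^ n * Q powr lam"
  proof (intro mult_mono)
    show "real (degree p + 1) \<le> real (n + 1)" using assms(1) dp by simp
    have "real (degree p) ^ nat j \<le> real n ^ nat j" using assms(1) dp by (intro power_mono) auto
    also have "\<dots> \<le> real n ^ n" using assms(5,6) False by (intro power_increasing) auto
    finally show "real (degree p) ^ nat j \<le> real n ^ n" .
  qed (use assms(2) height_nonneg[of P] in auto)
  finally have A: "\<bar>poly ((pderiv ^^ nat j) p) x\<bar> \<le> real (n + 1) * real n ^ n * Q powr lam" .
  have "\<bar>pbar P lam Q j x\<bar> = \<bar>poly ((pderiv ^^ nat j) p) x\<bar> * Q powr (- lam)"
    using False by (simp add: pbar_def p_def of_int_hom.map_poly_higher_pderiv abs_mult)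
  also have "\<dots> \<le> real (n + 1) * real n ^ n * Q powr lam * Q powr (- lam)"
    by (rule mult_right_mono[OF A]) simp
  also have "\<dots> = real (n + 1) * real n ^ n" using assms(3) by (simp add: powr_add[symmetric])
  finally show ?thesis .
qed

lemma entry_a:
  fixes P1 P2 :: "int poly"
  assumes r: "r < n1 + n2" and Q: "Q > 0"
  shows "\<bar>coeff (([:-x, 1:] ^ (ii n2 r) * selp n2 (of_int_poly P1 :: real poly) (of_int_poly P2) r) \<circ>\<^sub>p [:x, 1:]) c\<bar>
         \<le> Q powr (selp n2 lam1 lam2 r) * matM n1 n2 P1 P2 lam1 lam2 Q x (r+1) (c+1)"
proof (cases "c < ii n2 r")
  case True thus ?thesis by (simp add: rp_shift matM_def)
next
  case False
  define j where "j = c - ii n2 r"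
  define P where "P = selp n2 P1 P2 r"
  define lam where "lam = selp n2 lam1 lam2 r"
  have sel: "selp n2 (of_int_poly P1 :: real poly) (of_int_poly P2) r = of_int_poly P" unfolding P_def selp_def by simp
  have M: "matM n1 n2 P1 P2 lam1 lam2 Q x (r+1) (c+1) = \<bar>pbar P lam Q (int j) x\<bar>"
    using False unfolding matM_def P_def lam_def j_def selp_def ii_def by (auto simp: of_nat_diff) (simp add: algebra_simps)
  have "\<bar>coeff ((of_int_poly P :: real poly) \<circ>\<^sub>p [:x, 1:]) j\<bar> * fact j = \<bar>coeff ((of_int_poly P :: real poly) \<circ>\<^sub>p [:x, 1:]) j * fact j\<bar>"
    by (simp add: abs_mult)
  also have "\<dots> = \<bar>poly ((pderiv ^^ j) (of_int_poly P)) x\<bar>" by (simp only: taylor_coeff)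
  finally have "\<bar>coeff ((of_int_poly P :: real poly) \<circ>\<^sub>p [:x, 1:]) j\<bar> * fact j = \<bar>poly ((pderiv ^^ j) (of_int_poly P)) x\<bar>" .
  hence le: "\<bar>coeff ((of_int_poly P :: real poly) \<circ>\<^sub>p [:x, 1:]) j\<bar> \<le> \<bar>poly ((pderiv ^^ j) (of_int_poly P)) x\<bar>"
    using fact_ge_1[where 'a=real, of j] abs_ge_zero[of "coeff ((of_int_poly P :: real poly) \<circ>\<^sub>p [:x, 1:]) j"]
    by (smt (verit) mult_le_cancel_left1)
  have "\<bar>poly ((pderiv ^^ j) (of_int_poly P)) x\<bar> = Q powr lam * \<bar>pbar P lam Q (int j) x\<bar>"
    using Q by (simp add: pbar_def of_int_hom.map_poly_higher_pderiv abs_mult powr_minus field_simps)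
  with le M show ?thesis
    unfolding sel lam_def[symmetric] by (simp add: rp_shift False j_def)
qed

lemma matM_bound:
  fixes P1 P2 :: "int poly"
  assumes "degree P1 \<le> n" "degree P2 \<le> n" "real_of_int (height P1) \<le> Q powr lam1"
    "real_of_int (height P2) \<le> Q powr lam2" "Q > 0" "\<bar>x\<bar> \<le> 1" "s \<le> n" "n \<ge> 1"
  shows "matM n1 n2 P1 P2 lam1 lam2 Q x r s \<le> real (n + 1) * real n ^ n"
proof (cases "r \<le> n2")
  case True
  hence "matM n1 n2 P1 P2 lam1 lam2 Q x r s = \<bar>pbar P1 lam1 Q (int s - int r) x\<bar>" unfolding matM_def by simp
  also have "\<dots> \<le> real (n + 1) * real n ^ n"
    by (rule pbar_bound) (use assms in auto)
  finally show ?thesis .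
next
  case False
  hence "matM n1 n2 P1 P2 lam1 lam2 Q x r s = \<bar>pbar P2 lam2 Q (int s - int (r - n2)) x\<bar>" unfolding matM_def by simp
  also have "\<dots> \<le> real (n + 1) * real n ^ n"
    by (rule pbar_bound) (use assms in auto)
  finally show ?thesis .
qed

lemma perm_rect_ge:
  fixes M :: "nat \<Rightarrow> nat \<Rightarrow> real"
  assumes q: "q permutes {0..<N}" and k: "k \<le> N" and M: "\<And>r s. 0 \<le> M r s"
  shows "(\<Prod>c<k. M (q c + 1) (c + 1)) \<le> perm_rect N k M"
proof -
  define T where "T = {\<sigma>. \<sigma> \<in> {1..k} \<rightarrow>\<^sub>E {1..N} \<and> inj_on \<sigma> {1..k}}"
  define \<sigma> where "\<sigma> = restrict (\<lambda>s. q (s - 1) + 1) {1..k}"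
  have qN: "c < N \<Longrightarrow> q c < N" for c using permutes_in_image[OF q] by auto
  have qs: "s \<in> {1..k} \<Longrightarrow> q (s - 1) < N" for s using qN k by auto
  have "\<sigma> \<in> {1..k} \<rightarrow>\<^sub>E {1..N}" unfolding \<sigma>_def using qs by (fastforce simp: PiE_def Pi_def)
  moreover have "inj_on \<sigma> {1..k}"
  proof (rule inj_onI)
    fix s t assume st: "s \<in> {1..k}" "t \<in> {1..k}" "\<sigma> s = \<sigma> t"
    hence "q (s - 1) = q (t - 1)" unfolding \<sigma>_def by simp
    hence "s - 1 = t - 1" using permutes_inj[OF q] by (auto dest: injD)
    thus "s = t" using st by auto
  qed
  ultimately have mem: "\<sigma> \<in> T" unfolding T_def by simp
  have fin: "finite T" unfolding T_def by (rule finite_subset[of _ "{1..k} \<rightarrow>\<^sub>E {1..N}"]) (auto intro: finite_PiE)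
  have "(\<Prod>c<k. M (q c + 1) (c + 1)) = (\<Prod>s\<in>Suc ` {..<k}. M (\<sigma> s) s)"
    by (subst prod.reindex) (auto simp: \<sigma>_def intro!: prod.cong)
  also have "Suc ` {..<k} = {1..k}" by (simp add: image_Suc_lessThan)
  also have "(\<Prod>s\<in>{1..k}. M (\<sigma> s) s) \<le> (\<Sum>\<tau>\<in>T. \<Prod>s=1..k. M (\<tau> s) s)"
    by (rule member_le_sum[OF mem _ fin]) (auto intro: prod_nonneg M)
  finally show ?thesis unfolding perm_rect_def T_def .
qed

lemma sum_selp: "(\<Sum>r<n1+n2. selp n2 a b r) = real n2 * a + real n1 * b"
  unfolding sum_split_blocks by (simp add: selp_def)

lemma part_a:
  fixes P1 P2 :: "int poly" and n n1 n2 k :: nat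
  assumes n1: "n1 \<ge> 1" and n2: "n2 \<ge> 1" and nn: "n1 + n2 \<le> n" and Q: "Q \<ge> 1"
    and d1: "degree P1 = n1" and h1: "real_of_int (height P1) \<le> Q powr lam1"
    and d2: "degree P2 = n2" and h2: "real_of_int (height P2) \<le> Q powr lam2"
    and nc: "\<not> (\<exists>z::complex. poly (of_int_poly P1) z = 0 \<and> poly (of_int_poly P2) z = 0)"
    and xi: "-1/2 < \<xi>" "\<xi> < 1/2" and k: "1 \<le> k" "k \<le> n1 + n2"
  shows "1 \<le> (fact n * (real (n + 1) * real n ^ n) ^ n) * perm_rect (n1 + n2) k (matM n1 n2 P1 P2 lam1 lam2 Q \<xi>)
                 * Q powr (real n1 * lam2 + real n2 * lam1)"
proof -
  define N where "N = n1 + n2"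
  define K where "K = real (n + 1) * real n ^ n"
  define M where "M = matM n1 n2 P1 P2 lam1 lam2 Q \<xi>"
  define PR where "PR = perm_rect N k M"
  define Lam where "Lam = real n1 * lam2 + real n2 * lam1"
  define p1 :: "real poly" where "p1 = of_int_poly P1"
  define p2 :: "real poly" where "p2 = of_int_poly P2"
  define rp where "rp r = [:-\<xi>, 1:] ^ (ii n2 r) * selp n2 p1 p2 r" for r
  have n: "n \<ge> 1" using nn n1 by simp
  have Q0: "Q > 0" using Q by simp
  have K1: "K \<ge> 1"
  proof -
    have "1 \<le> real n ^ n" using n by (intro one_le_power) simp
    moreover have "1 \<le> real (n + 1)" by simp
    ultimately have "1 * 1 \<le> real (n + 1) * real n ^ n" by (intro mult_mono) auto
    thus ?thesis unfolding K_def by simp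
  qed
  have dp1: "degree p1 = n1" and dp2: "degree p2 = n2" unfolding p1_def p2_def using d1 d2 by simp_all
  have Mnn: "0 \<le> M r s" for r s unfolding M_def matM_def by simp
  have MK: "s \<le> n \<Longrightarrow> M r s \<le> K" for r s
    unfolding M_def K_def by (rule matM_bound) (use d1 d2 nn h1 h2 Q0 xi n in auto)
  have PR0: "0 \<le> PR" unfolding PR_def perm_rect_def using Mnn by (auto intro!: sum_nonneg prod_nonneg)
  have start: "1 \<le> (\<Sum>q\<in>{q. q permutes {0..<N}}. \<Prod>c<N.
           \<bar>\<Sum>b<N. coeff (rp (q c)) b * coeff ([:\<xi>, 1:] ^ b) c\<bar>)"
    unfolding N_def rp_def
    by (rule main_det[OF dp1 dp2]) (use S0_int[OF d1 d2 n1 nc] in \<open>auto simp: p1_def p2_def taylor_weights coeff_linear_power\<close>)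
  have bound: "(\<Prod>c<N. \<bar>\<Sum>b<N. coeff (rp (q c)) b * coeff ([:\<xi>, 1:] ^ b) c\<bar>) \<le> Q powr Lam * (K ^ (N - k) * PR)"
    if q: "q \<in> {q. q permutes {0..<N}}" for q
  proof -
    have q': "q permutes {0..<N}" using q by simp
    have qN: "c < N \<Longrightarrow> q c < N" for c using permutes_in_image[OF q'] by auto
    have "(\<Prod>c<N. \<bar>\<Sum>b<N. coeff (rp (q c)) b * coeff ([:\<xi>, 1:] ^ b) c\<bar>)
        = (\<Prod>c<N. \<bar>coeff (rp (q c) \<circ>\<^sub>p [:\<xi>, 1:]) c\<bar>)"
      by (intro prod.cong refl arg_cong[where f=abs] pcompose_expand[symmetric])
         (use qN degree_rp[OF _ dp1 dp2] in \<open>auto simp: rp_def N_def\<close>)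
    also have "\<dots> \<le> (\<Prod>c<N. Q powr (selp n2 lam1 lam2 (q c)) * M (q c + 1) (c + 1))"
    proof (intro prod_mono conjI abs_ge_zero)
      fix c assume "c \<in> {..<N}"
      hence "q c < n1 + n2" using qN unfolding N_def by auto
      show "\<bar>coeff (rp (q c) \<circ>\<^sub>p [:\<xi>, 1:]) c\<bar> \<le> Q powr (selp n2 lam1 lam2 (q c)) * M (q c + 1) (c + 1)"
        unfolding rp_def p1_def p2_def M_def by (rule entry_a[OF \<open>q c < n1 + n2\<close> Q0])
    qed
    also have "\<dots> = (\<Prod>c<N. Q powr (selp n2 lam1 lam2 (q c))) * (\<Prod>c<N. M (q c + 1) (c + 1))"
      by (rule prod.distrib)
    also have "(\<Prod>c<N. Q powr (selp n2 lam1 lam2 (q c))) = Q powr Lam"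
    proof -
      have "(\<Prod>c<N. Q powr (selp n2 lam1 lam2 (q c))) = (\<Prod>c\<in>{0..<N}. ((\<lambda>r. Q powr (selp n2 lam1 lam2 r)) \<circ> q) c)"
        by (simp add: atLeast0LessThan)
      also have "\<dots> = (\<Prod>r\<in>{0..<N}. Q powr (selp n2 lam1 lam2 r))"
        by (rule prod.permute[OF q', symmetric])
      also have "\<dots> = Q powr (\<Sum>r<N. selp n2 lam1 lam2 r)"
        using Q0 by (simp add: powr_sum atLeast0LessThan)
      also have "(\<Sum>r<N. selp n2 lam1 lam2 r) = Lam" unfolding N_def sum_selp Lam_def by simp
      finally show ?thesis .
    qed
    also have "(\<Prod>c<N. M (q c + 1) (c + 1)) \<le> K ^ (N - k) * PR"
    proof -
      have split: "{..<N} = {..<k} \<union> {k..<N}" using k unfolding N_def by auto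
      have "(\<Prod>c<N. M (q c + 1) (c + 1)) = (\<Prod>c<k. M (q c + 1) (c + 1)) * (\<Prod>c\<in>{k..<N}. M (q c + 1) (c + 1))"
        unfolding split by (rule prod.union_disjoint) auto
      also have "\<dots> \<le> PR * K ^ (N - k)"
      proof (rule mult_mono)
        show "(\<Prod>c<k. M (q c + 1) (c + 1)) \<le> PR"
          unfolding PR_def by (rule perm_rect_ge[OF q']) (use k Mnn in \<open>auto simp: N_def\<close>)
        show "(\<Prod>c\<in>{k..<N}. M (q c + 1) (c + 1)) \<le> K ^ (N - k)"
          by (rule prod_le_power) (use Mnn MK K1 nn in \<open>auto simp: N_def\<close>)
      qed (use Mnn K1 PR0 in \<open>auto intro: prod_nonneg\<close>)
      finally show ?thesis by (simp add: mult.commute)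
    qed
    finally show ?thesis by (simp add: mult_left_mono)
  qed
  have "1 \<le> (\<Sum>q\<in>{q. q permutes {0..<N}}. Q powr Lam * (K ^ (N - k) * PR))"
    using start sum_mono[OF bound] by (rule order.trans)
  also have "\<dots> = fact N * (Q powr Lam * (K ^ (N - k) * PR))"
    by (simp add: card_permutations)
  also have "\<dots> \<le> fact n * (Q powr Lam * (K ^ n * PR))"
  proof (rule mult_mono)
    show "fact N \<le> (fact n :: real)" using nn unfolding N_def by (simp add: fact_mono)
    have "K ^ (N - k) \<le> K ^ n" using K1 nn by (intro power_increasing) (auto simp: N_def)
    thus "Q powr Lam * (K ^ (N - k) * PR) \<le> Q powr Lam * (K ^ n * PR)"
      using PR0 by (intro mult_left_mono mult_right_mono) auto
  qed (use K1 Mnn in \<open>auto intro!: mult_nonneg_nonneg sum_nonneg prod_nonneg simp: PR_def perm_rect_def\<close>)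
  finally show ?thesis unfolding K_def M_def PR_def Lam_def N_def by (simp add: mult_ac)
qed

lemma poly_expand:
  fixes p :: "real poly"
  assumes "degree p < N"
  shows "(\<Sum>b<N. coeff p b * y ^ b) = poly p y"
  unfolding poly_altdef using assms by (intro sum.mono_neutral_right) (auto simp: coeff_eq_0)

definition wb :: "real \<Rightarrow> real \<Rightarrow> nat \<Rightarrow> nat \<Rightarrow> real" where
  "wb y0 h c b = (if c = 0 then y0 ^ b else if c = 1 then ((y0 + h) ^ b - y0 ^ b) / h
     else if c = 2 then ((y0 + 2 * h) ^ b - 2 * (y0 + h) ^ b + y0 ^ b) / (2 * h ^ 2)
     else coeff ([:y0, 1:] ^ b) c)"

lemma wb_low:
  assumes "h \<noteq> 0" "b < c"
  shows "wb y0 h c b = 0"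
proof -
  consider "c = 1" | "c = 2" | "c \<ge> 3" using assms(2) by linarith
  thus ?thesis
  proof cases
    case 1 thus ?thesis using assms by (simp add: wb_def)
  next
    case 2
    hence "b = 0 \<or> b = 1" using assms(2) by auto
    thus ?thesis using 2 by (auto simp: wb_def)
  next
    case 3 thus ?thesis using assms by (simp add: wb_def taylor_weights)
  qed
qed

lemma wb_diag:
  assumes "h \<noteq> 0"
  shows "wb y0 h c c = 1"
proof -
  consider "c = 0" | "c = 1" | "c = 2" | "c \<ge> 3" by linarith
  thus ?thesis
  proof cases
    case 3
    have "(y0 + 2 * h)\<^sup>2 - 2 * (y0 + h)\<^sup>2 + y0\<^sup>2 = 2 * h ^ 2" by (simp add: power2_eq_square algebra_simps)
    thus ?thesis using 3 assms by (simp add: wb_def)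
  qed (use assms in \<open>auto simp: wb_def coeff_linear_power\<close>)
qed

lemma wb_sum:
  fixes p :: "real poly"
  assumes "degree p < N"
  shows "(\<Sum>b<N. coeff p b * wb y0 h c b) =
    (if c = 0 then poly p y0 else if c = 1 then (poly p (y0 + h) - poly p y0) / h
     else if c = 2 then (poly p (y0 + 2 * h) - 2 * poly p (y0 + h) + poly p y0) / (2 * h ^ 2)
     else coeff (p \<circ>\<^sub>p [:y0, 1:]) c)"
proof -
  note pe = poly_expand[OF assms]
  consider "c = 0" | "c = 1" | "c = 2" | "c \<ge> 3" by linarith
  thus ?thesis
  proof cases
    case 1 thus ?thesis by (simp add: wb_def pe)
  next
    case 2
    have "(\<Sum>b<N. coeff p b * wb y0 h c b) = (\<Sum>b<N. (coeff p b * (y0 + h) ^ b - coeff p b * y0 ^ b) / h)"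
      using 2 by (intro sum.cong) (auto simp: wb_def algebra_simps diff_divide_distrib)
    also have "\<dots> = ((\<Sum>b<N. coeff p b * (y0 + h) ^ b) - (\<Sum>b<N. coeff p b * y0 ^ b)) / h"
      by (simp add: sum_divide_distrib[symmetric] sum_subtractf)
    finally show ?thesis using 2 by (simp add: pe)
  next
    case 3
    have "(\<Sum>b<N. coeff p b * wb y0 h c b) = (\<Sum>b<N. (coeff p b * (y0 + 2 * h) ^ b - 2 * (coeff p b * (y0 + h) ^ b) + coeff p b * y0 ^ b) / (2 * h ^ 2))"
      using 3 by (intro sum.cong) (auto simp: wb_def algebra_simps add_divide_distrib diff_divide_distrib)
    also have "\<dots> = ((\<Sum>b<N. coeff p b * (y0 + 2 * h) ^ b) - 2 * (\<Sum>b<N. coeff p b * (y0 + h) ^ b) + (\<Sum>b<N. coeff p b * y0 ^ b)) / (2 * h ^ 2)"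
      by (simp add: sum_divide_distrib[symmetric] sum_subtractf sum.distrib sum_distrib_left)
    finally show ?thesis using 3 by (simp add: pe)
  next
    case 4 thus ?thesis using pcompose_expand[OF assms, of "[:y0, 1:]" c] by (simp add: wb_def)
  qed
qed

lemma three_rows:
  assumes q: "q permutes {0..<N}" and N: "N \<ge> 3"
  shows "ii n2 (q 0) + ii n2 (q 1) + ii n2 (q 2) \<ge> 1"
proof (rule ccontr)
  assume "\<not> ?thesis"
  hence z: "ii n2 (q 0) = 0" "ii n2 (q 1) = 0" "ii n2 (q 2) = 0" by auto
  have "q j = 0 \<or> q j = n2" if "ii n2 (q j) = 0" for j
    using that by (auto simp: ii_def split: if_splits)
  hence "q 0 \<in> {0, n2}" "q 1 \<in> {0, n2}" "q 2 \<in> {0, n2}" using z by auto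
  moreover have "q 0 \<noteq> q 1" "q 0 \<noteq> q 2" "q 1 \<noteq> q 2"
    using permutes_inj[OF q] by (auto dest: injD)
  ultimately show False by auto
qed

lemma prod_split3:
  fixes N :: nat
  assumes "N \<ge> 3"
  shows "(\<Prod>c<N. f c) = f 0 * f 1 * f 2 * (\<Prod>c\<in>{3..<N}. (f c :: real))"
proof -
  have "{..<N} = {0, 1, 2} \<union> {3..<N}" using assms by auto
  hence "(\<Prod>c<N. f c) = (\<Prod>c\<in>{0,1,2}. f c) * (\<Prod>c\<in>{3..<N}. f c)"
    by (simp add: prod.union_disjoint)
  thus ?thesis by (simp add: mult_ac)
qed

lemma prod_perm_powr:
  assumes q: "q permutes {0..<n1+n2}" and Q: "Q > 0"
  shows "(\<Prod>c<n1+n2. Q powr (selp n2 lam1 lam2 (q c))) = Q powr (real n1 * lam2 + real n2 * lam1)"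
proof -
  have "(\<Prod>c<n1+n2. Q powr (selp n2 lam1 lam2 (q c))) = (\<Prod>c\<in>{0..<n1+n2}. ((\<lambda>r. Q powr (selp n2 lam1 lam2 r)) \<circ> q) c)"
    by (simp add: atLeast0LessThan)
  also have "\<dots> = (\<Prod>r\<in>{0..<n1+n2}. Q powr (selp n2 lam1 lam2 r))"
    by (rule prod.permute[OF q, symmetric])
  also have "\<dots> = Q powr (\<Sum>r<n1+n2. selp n2 lam1 lam2 r)"
    using Q by (simp add: powr_sum atLeast0LessThan)
  also have "(\<Sum>r<n1+n2. selp n2 lam1 lam2 r) = real n1 * lam2 + real n2 * lam1" unfolding sum_selp by simp
  finally show ?thesis .
qed

lemma part_b:
  fixes P1 P2 :: "int poly" and n n1 n2 :: nat
  assumes n1: "n1 \<ge> 1" and n2: "n2 \<ge> 1" and nn: "n1 + n2 \<le> n" and n3: "n1 + n2 \<ge> 3" and Q: "Q \<ge> 1"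
    and d1: "degree P1 = n1" and h1: "real_of_int (height P1) \<le> Q powr lam1"
    and d2: "degree P2 = n2" and h2: "real_of_int (height P2) \<le> Q powr lam2"
    and nc: "\<not> (\<exists>z::complex. poly (of_int_poly P1) z = 0 \<and> poly (of_int_poly P2) z = 0)"
    and eta: "eta > 0" and ab: "a < b" and I1: "{a<..<b} \<subseteq> I" and len: "b - a = Q powr (- eta)"
    and I2: "I \<subseteq> {-1/2<..<1/2}"
    and bnd: "\<forall>x\<in>I. \<bar>poly (of_int_poly P1) x\<bar> \<le> Q powr (- tau1) \<and> \<bar>poly (of_int_poly P2) x\<bar> \<le> Q powr (- tau2)"
  shows "1 \<le> (fact n * (2 ^ (n + 1)) ^ 3 * (real (n + 1) * real n ^ n) ^ n * 16)
           * Q powr (real n1 * lam2 + real n2 * lam1 - 3 * min (tau1 + lam1) (tau2 + lam2) + 2 * eta)"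
proof -
  define N where "N = n1 + n2"
  define K where "K = real (n + 1) * real n ^ n"
  define A :: real where "A = 2 ^ (n + 1)"
  define m where "m = min (tau1 + lam1) (tau2 + lam2)"
  define Lam where "Lam = real n1 * lam2 + real n2 * lam1"
  define p1 :: "real poly" where "p1 = of_int_poly P1"
  define p2 :: "real poly" where "p2 = of_int_poly P2"
  define h where "h = (b - a) / 4"
  define y0 where "y0 = a + h"
  define rp where "rp r = [:-y0, 1:] ^ (ii n2 r) * selp n2 p1 p2 r" for r
  define lsel where "lsel r = selp n2 lam1 lam2 r" for r
  define tsel where "tsel r = selp n2 tau1 tau2 r" for r
  define \<beta> where "\<beta> r c = (if c < 3 then A * h ^ (ii n2 r) * Q powr (- (tsel r + lsel r)) / h ^ c else K)" for r c
  have n: "n \<ge> 1" using nn n1 by simp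
  have Q0: "Q > 0" using Q by simp
  have K1: "K \<ge> 1"
  proof -
    have "1 \<le> real n ^ n" using n by (intro one_le_power) simp
    moreover have "1 \<le> real (n + 1)" by simp
    ultimately have "1 * 1 \<le> real (n + 1) * real n ^ n" by (intro mult_mono) auto
    thus ?thesis unfolding K_def by simp
  qed
  have A0: "A > 0" unfolding A_def by simp
  have h0: "h > 0" unfolding h_def using ab by simp
  have ba1: "b - a \<le> 1" unfolding len using Q eta by (metis powr_mono powr_zero_eq_one Q0 neg_le_0_iff_le less_imp_le order_less_irrefl)
  have h1': "h \<le> 1" unfolding h_def using ba1 by simp
  have dp1: "degree p1 = n1" and dp2: "degree p2 = n2" unfolding p1_def p2_def using d1 d2 by simp_all
  have "y0 \<in> {a<..<b}" "y0 + h \<in> {a<..<b}" "y0 + 2 * h \<in> {a<..<b}"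
    using ab unfolding y0_def h_def by (auto simp: field_simps)
  hence nodes: "y0 \<in> I" "y0 + h \<in> I" "y0 + 2 * h \<in> I" using I1 by auto
  have "y0 \<in> {-1/2<..<1/2}" using nodes(1) I2 by blast
  hence y0b: "\<bar>y0\<bar> \<le> 1" by auto
  have Pb: "y \<in> I \<Longrightarrow> \<bar>poly (selp n2 p1 p2 r) y\<bar> \<le> Q powr (- tsel r)" for y r
    using bnd unfolding p1_def p2_def tsel_def selp_def by auto
  have degrp: "r < N \<Longrightarrow> degree (rp r) < N" for r
    unfolding rp_def N_def using degree_rp[OF _ dp1 dp2] by auto
  have start: "1 \<le> (\<Sum>q\<in>{q. q permutes {0..<N}}. \<Prod>c<N.
           \<bar>\<Sum>b<N. coeff (rp (q c)) b * wb y0 h c b\<bar>)"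
    unfolding N_def rp_def
    by (rule main_det[OF dp1 dp2]) (use S0_int[OF d1 d2 n1 nc] h0 in \<open>auto simp: p1_def p2_def wb_low wb_diag\<close>)
  have entry: "\<bar>\<Sum>b<N. coeff (rp r) b * wb y0 h c b\<bar> \<le> \<beta> r c * Q powr (lsel r)"
    if r: "r < N" and c: "c < N" for r c
  proof (cases "c < 3")
    case False
    have "\<bar>\<Sum>b<N. coeff (rp r) b * wb y0 h c b\<bar> = \<bar>coeff (rp r \<circ>\<^sub>p [:y0, 1:]) c\<bar>"
      using wb_sum[OF degrp[OF r], of y0 h c] False by simp
    also have "\<dots> \<le> Q powr (lsel r) * matM n1 n2 P1 P2 lam1 lam2 Q y0 (r+1) (c+1)"
      unfolding rp_def p1_def p2_def lsel_def by (rule entry_a[OF r[unfolded N_def] Q0])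
    also have "\<dots> \<le> Q powr (lsel r) * K"
      unfolding K_def by (intro mult_left_mono matM_bound) (use d1 d2 nn h1 h2 Q0 y0b n c in \<open>auto simp: N_def\<close>)
    finally show ?thesis using False unfolding \<beta>_def by (simp add: mult.commute)
  next
    case True
    define i where "i = ii n2 r"
    define T where "T = Q powr (- tsel r)"
    define V where "V = 2 ^ n * h ^ i * T"
    have iN: "i \<le> n" unfolding i_def ii_def using r nn unfolding N_def by auto
    have T0: "T \<ge> 0" unfolding T_def by simp
    have val: "\<bar>poly (rp r) (y0 + real t * h)\<bar> \<le> V" if t: "t \<le> 2" "y0 + real t * h \<in> I" for t :: nat
    proof -
      have "poly (rp r) (y0 + real t * h) = (real t * h) ^ i * poly (selp n2 p1 p2 r) (y0 + real t * h)"
        unfolding rp_def i_def by (simp add: poly_power)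
      hence "\<bar>poly (rp r) (y0 + real t * h)\<bar> = (real t * h) ^ i * \<bar>poly (selp n2 p1 p2 r) (y0 + real t * h)\<bar>"
        using h0 by (simp add: abs_mult power_abs)
      also have "\<dots> \<le> (2 ^ n * h ^ i) * T"
      proof (rule mult_mono)
        have "(real t * h) ^ i \<le> (2 * h) ^ i" using t h0 by (intro power_mono mult_right_mono) auto
        also have "\<dots> = 2 ^ i * h ^ i" by (simp add: power_mult_distrib)
        also have "\<dots> \<le> 2 ^ n * h ^ i" using iN h0 by (intro mult_right_mono power_increasing) auto
        finally show "(real t * h) ^ i \<le> 2 ^ n * h ^ i" .
        show "\<bar>poly (selp n2 p1 p2 r) (y0 + real t * h)\<bar> \<le> T" unfolding T_def by (rule Pb[OF t(2)])
      qed (use h0 T0 in auto)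
      finally show ?thesis unfolding V_def .
    qed
    have v0: "\<bar>poly (rp r) y0\<bar> \<le> V" using val[of 0] nodes by simp
    have v1: "\<bar>poly (rp r) (y0 + h)\<bar> \<le> V" using val[of 1] nodes by simp
    have v2: "\<bar>poly (rp r) (y0 + 2 * h)\<bar> \<le> V" using val[of 2] nodes by simp
    have V0: "V \<ge> 0" using v0 by linarith
    have bnd2: "\<bar>\<Sum>b<N. coeff (rp r) b * wb y0 h c b\<bar> \<le> 2 * V / h ^ c"
    proof -
      consider "c = 0" | "c = 1" | "c = 2" using True by linarith
      thus ?thesis
      proof cases
        case 1 thus ?thesis using wb_sum[OF degrp[OF r], of y0 h c] v0 V0 by simp
      next
        case 2
        have "\<bar>(poly (rp r) (y0 + h) - poly (rp r) y0) / h\<bar> = \<bar>poly (rp r) (y0 + h) - poly (rp r) y0\<bar> / h"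
          using h0 by simp
        also have "\<dots> \<le> (2 * V) / h" using v0 v1 h0 by (intro divide_right_mono) auto
        finally show ?thesis using wb_sum[OF degrp[OF r], of y0 h c] 2 by simp
      next
        case 3
        have "\<bar>(poly (rp r) (y0 + 2 * h) - 2 * poly (rp r) (y0 + h) + poly (rp r) y0) / (2 * h ^ 2)\<bar>
              = \<bar>poly (rp r) (y0 + 2 * h) - 2 * poly (rp r) (y0 + h) + poly (rp r) y0\<bar> / (2 * h ^ 2)"
          using h0 by simp
        also have "\<dots> \<le> (4 * V) / (2 * h ^ 2)" using v0 v1 v2 h0 by (intro divide_right_mono) auto
        also have "\<dots> = 2 * V / h ^ 2" by simp
        finally show ?thesis using wb_sum[OF degrp[OF r], of y0 h c] 3 by simp
      qed
    qed
    have "2 * V / h ^ c = \<beta> r c * Q powr (lsel r)"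
    proof -
      have "T = Q powr (- (tsel r + lsel r)) * Q powr (lsel r)" unfolding T_def by (simp add: powr_add[symmetric])
      thus ?thesis unfolding \<beta>_def V_def A_def i_def using True by (simp add: field_simps)
    qed
    with bnd2 show ?thesis by simp
  qed
  have \<beta>0: "\<beta> r c \<ge> 0" for r c unfolding \<beta>_def using A0 h0 K1 by auto
  have perq: "(\<Prod>c<N. \<bar>\<Sum>b<N. coeff (rp (q c)) b * wb y0 h c b\<bar>) \<le> (A ^ 3 / h ^ 2 * (Q powr (- m)) ^ 3 * K ^ n) * Q powr Lam"
    if q: "q \<in> {q. q permutes {0..<N}}" for q
  proof -
    have q': "q permutes {0..<N}" using q by simp
    have qN: "c < N \<Longrightarrow> q c < N" for c using permutes_in_image[OF q'] by auto
    have "(\<Prod>c<N. \<bar>\<Sum>b<N. coeff (rp (q c)) b * wb y0 h c b\<bar>) \<le> (\<Prod>c<N. \<beta> (q c) c * Q powr (lsel (q c)))"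
      by (intro prod_mono conjI abs_ge_zero entry qN) auto
    also have "\<dots> = (\<Prod>c<N. \<beta> (q c) c) * (\<Prod>c<N. Q powr (lsel (q c)))" by (rule prod.distrib)
    also have "(\<Prod>c<N. Q powr (lsel (q c))) = Q powr Lam"
      unfolding lsel_def Lam_def using prod_perm_powr[OF q'[unfolded N_def] Q0] by (simp add: N_def)
    also have "(\<Prod>c<N. \<beta> (q c) c) \<le> A ^ 3 / h ^ 2 * (Q powr (- m)) ^ 3 * K ^ n"
    proof -
      have E: "Q powr (- (tsel r + lsel r)) \<le> Q powr (- m)" for r
        using Q unfolding tsel_def lsel_def m_def selp_def by (intro powr_mono) auto
      have E0: "Q powr (- (tsel r + lsel r)) \<ge> 0" for r by simp
      have "(\<Prod>c<N. \<beta> (q c) c) = \<beta> (q 0) 0 * \<beta> (q 1) 1 * \<beta> (q 2) 2 * (\<Prod>c\<in>{3..<N}. \<beta> (q c) c)"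
        using n3 by (intro prod_split3) (simp add: N_def)
      also have "(\<Prod>c\<in>{3..<N}. \<beta> (q c) c) = K ^ (N - 3)" unfolding \<beta>_def by simp
      also have "\<beta> (q 0) 0 * \<beta> (q 1) 1 * \<beta> (q 2) 2 =
         A ^ 3 * h ^ (ii n2 (q 0) + ii n2 (q 1) + ii n2 (q 2)) / h ^ 3 *
         (Q powr (- (tsel (q 0) + lsel (q 0))) * Q powr (- (tsel (q 1) + lsel (q 1))) * Q powr (- (tsel (q 2) + lsel (q 2))))"
        unfolding \<beta>_def by (simp add: power_add field_simps power3_eq_cube power2_eq_square)
      also have "\<dots> \<le> A ^ 3 * h / h ^ 3 * (Q powr (- m) * Q powr (- m) * Q powr (- m))"
      proof (rule mult_mono)
        have "h ^ (ii n2 (q 0) + ii n2 (q 1) + ii n2 (q 2)) \<le> h ^ 1"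
          using three_rows[OF q'] n3 h0 h1' by (intro power_decreasing) (auto simp: N_def)
        thus "A ^ 3 * h ^ (ii n2 (q 0) + ii n2 (q 1) + ii n2 (q 2)) / h ^ 3 \<le> A ^ 3 * h / h ^ 3"
          using A0 h0 by (intro divide_right_mono mult_left_mono) auto
        show "Q powr (- (tsel (q 0) + lsel (q 0))) * Q powr (- (tsel (q 1) + lsel (q 1))) * Q powr (- (tsel (q 2) + lsel (q 2)))
              \<le> Q powr (- m) * Q powr (- m) * Q powr (- m)"
          using E E0 by (intro mult_mono) auto
      qed (use A0 h0 in auto)
      also have "A ^ 3 * h / h ^ 3 = A ^ 3 / h ^ 2" using h0 by (simp add: power3_eq_cube power2_eq_square)
      finally have "(\<Prod>c<N. \<beta> (q c) c) \<le> A ^ 3 / h ^ 2 * (Q powr (- m) * Q powr (- m) * Q powr (- m)) * K ^ (N - 3)"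
        using K1 by (simp add: mult_right_mono)
      also have "\<dots> \<le> A ^ 3 / h ^ 2 * (Q powr (- m) * Q powr (- m) * Q powr (- m)) * K ^ n"
        using K1 A0 h0 nn by (intro mult_left_mono power_increasing) (auto simp: N_def)
      finally show ?thesis by (simp add: power3_eq_cube)
    qed
    finally show ?thesis by (simp add: mult_right_mono)
  qed
  define W where "W = A ^ 3 / h ^ 2 * (Q powr (- m)) ^ 3 * K ^ n * Q powr Lam"
  have W0: "W \<ge> 0" unfolding W_def using A0 h0 K1 by simp
  have "1 \<le> (\<Sum>q\<in>{q. q permutes {0..<N}}. W)"
    using start sum_mono[OF perq] unfolding W_def by (rule order.trans)
  also have "\<dots> = fact N * W" by (simp add: card_permutations)
  also have "\<dots> \<le> fact n * W" using nn W0 unfolding N_def by (intro mult_right_mono) (auto simp: fact_mono)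
  also have "fact n * W = (fact n * A ^ 3 * K ^ n * 16) * Q powr (Lam - 3 * m + 2 * eta)"
  proof -
    have "h ^ 2 = Q powr (- 2 * eta) / 16"
      unfolding h_def len using Q0 by (simp add: power_divide powr_power[symmetric] power2_eq_square powr_add[symmetric])
    hence e1: "1 / h ^ 2 = 16 * Q powr (2 * eta)" using Q0 h0 by (simp add: powr_minus divide_simps mult_ac)
    have e2: "(Q powr (- m)) ^ 3 = Q powr (- 3 * m)" using Q0 by (simp add: powr_power)
    have "W = A ^ 3 * K ^ n * (1 / h ^ 2) * (Q powr (- m)) ^ 3 * Q powr Lam" unfolding W_def by simp
    also have "\<dots> = A ^ 3 * K ^ n * 16 * (Q powr (2 * eta) * Q powr (- 3 * m) * Q powr Lam)"
      unfolding e1 e2 by (simp add: mult_ac)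
    finally have "W = A ^ 3 * K ^ n * 16 * (Q powr (2 * eta) * Q powr (- 3 * m) * Q powr Lam)" .
    also have "Q powr (2 * eta) * Q powr (- 3 * m) * Q powr Lam = Q powr (Lam - 3 * m + 2 * eta)"
      by (simp add: powr_add[symmetric] algebra_simps)
    finally show ?thesis by (simp add: mult_ac)
  qed
  finally show ?thesis unfolding A_def K_def Lam_def m_def .
qed

theorem lemma8:
  fixes n :: nat
  shows
  "(\<exists>c>0. \<forall>(n1::nat) (n2::nat) (lam1::real) (lam2::real) (Q::real) (P1::int poly) (P2::int poly)
        (\<xi>::real) (k::nat).
      n1 \<ge> 1 \<and> n2 \<ge> 1 \<and> n1 + n2 \<le> n \<and> lam1 \<ge> 0 \<and> lam2 \<ge> 0 \<and> Q \<ge> 1 \<and>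
      degree P1 = n1 \<and> real_of_int (height P1) \<le> Q powr lam1 \<and>
      degree P2 = n2 \<and> real_of_int (height P2) \<le> Q powr lam2 \<and>
      \<not> (\<exists>z::complex. poly (map_poly of_int P1) z = 0 \<and> poly (map_poly of_int P2) z = 0) \<and>
      -1/2 < \<xi> \<and> \<xi> < 1/2 \<and> 1 \<le> k \<and> k \<le> n1 + n2
      \<longrightarrow> 1 \<le> c * perm_rect (n1 + n2) k (matM n1 n2 P1 P2 lam1 lam2 Q \<xi>)
                 * Q powr (real n1 * lam2 + real n2 * lam1))
   \<and>
   (\<forall>\<delta>::real. \<delta> > 0 \<longrightarrow> (\<exists>Q0::real. \<forall>(n1::nat) (n2::nat) (lam1::real) (lam2::real) (Q::real)
        (P1::int poly) (P2::int poly) (tau1::real) (tau2::real) (eta::real) (I::real set) (a::real) (b::real).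
      n1 \<ge> 1 \<and> n2 \<ge> 1 \<and> n1 + n2 \<le> n \<and> n1 + n2 \<ge> 3 \<and> lam1 \<ge> 0 \<and> lam2 \<ge> 0 \<and> Q \<ge> 1 \<and>
      degree P1 = n1 \<and> real_of_int (height P1) \<le> Q powr lam1 \<and>
      degree P2 = n2 \<and> real_of_int (height P2) \<le> Q powr lam2 \<and>
      \<not> (\<exists>z::complex. poly (map_poly of_int P1) z = 0 \<and> poly (map_poly of_int P2) z = 0) \<and>
      eta > 0 \<and> a < b \<and> {a<..<b} \<subseteq> I \<and> I \<subseteq> {a..b} \<and> b - a = Q powr (- eta) \<and>
      I \<subseteq> {-1/2<..<1/2} \<and>
      (\<forall>x\<in>I. \<bar>poly (map_poly real_of_int P1) x\<bar> \<le> Q powr (- tau1) \<and>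
               \<bar>poly (map_poly real_of_int P2) x\<bar> \<le> Q powr (- tau2)) \<and>
      Q > Q0
      \<longrightarrow> 3 * min (tau1 + lam1) (tau2 + lam2) - 2 * eta
            < real n1 * lam2 + real n2 * lam1 + \<delta>))"
proof (intro conjI)
  define K where "K = real (n + 1) * real n ^ n"
  have Kpos: "K > 0" unfolding K_def by (cases "n = 0") auto
  show "\<exists>c>0. \<forall>(n1::nat) (n2::nat) (lam1::real) (lam2::real) (Q::real) (P1::int poly) (P2::int poly)
        (\<xi>::real) (k::nat).
      n1 \<ge> 1 \<and> n2 \<ge> 1 \<and> n1 + n2 \<le> n \<and> lam1 \<ge> 0 \<and> lam2 \<ge> 0 \<and> Q \<ge> 1 \<and>
      degree P1 = n1 \<and> real_of_int (height P1) \<le> Q powr lam1 \<and>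
      degree P2 = n2 \<and> real_of_int (height P2) \<le> Q powr lam2 \<and>
      \<not> (\<exists>z::complex. poly (map_poly of_int P1) z = 0 \<and> poly (map_poly of_int P2) z = 0) \<and>
      -1/2 < \<xi> \<and> \<xi> < 1/2 \<and> 1 \<le> k \<and> k \<le> n1 + n2
      \<longrightarrow> 1 \<le> c * perm_rect (n1 + n2) k (matM n1 n2 P1 P2 lam1 lam2 Q \<xi>)
                 * Q powr (real n1 * lam2 + real n2 * lam1)"
  proof (intro exI[of _ "fact n * K ^ n"] conjI allI impI)
    show "0 < fact n * K ^ n" using Kpos by simp
  next
    fix n1 n2 :: nat and lam1 lam2 Q :: real and P1 P2 :: "int poly" and \<xi> :: real and k :: nat
    assume H: "n1 \<ge> 1 \<and> n2 \<ge> 1 \<and> n1 + n2 \<le> n \<and> lam1 \<ge> 0 \<and> lam2 \<ge> 0 \<and> Q \<ge> 1 \<and>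
      degree P1 = n1 \<and> real_of_int (height P1) \<le> Q powr lam1 \<and>
      degree P2 = n2 \<and> real_of_int (height P2) \<le> Q powr lam2 \<and>
      \<not> (\<exists>z::complex. poly (map_poly of_int P1) z = 0 \<and> poly (map_poly of_int P2) z = 0) \<and>
      -1/2 < \<xi> \<and> \<xi> < 1/2 \<and> 1 \<le> k \<and> k \<le> n1 + n2"
    show "1 \<le> fact n * K ^ n * perm_rect (n1 + n2) k (matM n1 n2 P1 P2 lam1 lam2 Q \<xi>)
                 * Q powr (real n1 * lam2 + real n2 * lam1)"
      unfolding K_def by (rule part_a) (use H in auto)
  qed
next
  define K where "K = real (n + 1) * real n ^ n"
  have Kpos: "K > 0" unfolding K_def by (cases "n = 0") auto
  show "\<forall>\<delta>::real. \<delta> > 0 \<longrightarrow> (\<exists>Q0::real. \<forall>(n1::nat) (n2::nat) (lam1::real) (lam2::real) (Q::real)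
        (P1::int poly) (P2::int poly) (tau1::real) (tau2::real) (eta::real) (I::real set) (a::real) (b::real).
      n1 \<ge> 1 \<and> n2 \<ge> 1 \<and> n1 + n2 \<le> n \<and> n1 + n2 \<ge> 3 \<and> lam1 \<ge> 0 \<and> lam2 \<ge> 0 \<and> Q \<ge> 1 \<and>
      degree P1 = n1 \<and> real_of_int (height P1) \<le> Q powr lam1 \<and>
      degree P2 = n2 \<and> real_of_int (height P2) \<le> Q powr lam2 \<and>
      \<not> (\<exists>z::complex. poly (map_poly of_int P1) z = 0 \<and> poly (map_poly of_int P2) z = 0) \<and>
      eta > 0 \<and> a < b \<and> {a<..<b} \<subseteq> I \<and> I \<subseteq> {a..b} \<and> b - a = Q powr (- eta) \<and>
      I \<subseteq> {-1/2<..<1/2} \<and>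
      (\<forall>x\<in>I. \<bar>poly (map_poly real_of_int P1) x\<bar> \<le> Q powr (- tau1) \<and>
               \<bar>poly (map_poly real_of_int P2) x\<bar> \<le> Q powr (- tau2)) \<and>
      Q > Q0
      \<longrightarrow> 3 * min (tau1 + lam1) (tau2 + lam2) - 2 * eta
            < real n1 * lam2 + real n2 * lam1 + \<delta>)"
  proof (intro allI impI)
    fix \<delta> :: real assume d: "\<delta> > 0"
    define C :: real where "C = fact n * (2 ^ (n + 1)) ^ 3 * K ^ n * 16"
    have C0: "C > 0" unfolding C_def using Kpos by simp
    show "\<exists>Q0::real. \<forall>(n1::nat) (n2::nat) (lam1::real) (lam2::real) (Q::real)
        (P1::int poly) (P2::int poly) (tau1::real) (tau2::real) (eta::real) (I::real set) (a::real) (b::real).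
      n1 \<ge> 1 \<and> n2 \<ge> 1 \<and> n1 + n2 \<le> n \<and> n1 + n2 \<ge> 3 \<and> lam1 \<ge> 0 \<and> lam2 \<ge> 0 \<and> Q \<ge> 1 \<and>
      degree P1 = n1 \<and> real_of_int (height P1) \<le> Q powr lam1 \<and>
      degree P2 = n2 \<and> real_of_int (height P2) \<le> Q powr lam2 \<and>
      \<not> (\<exists>z::complex. poly (map_poly of_int P1) z = 0 \<and> poly (map_poly of_int P2) z = 0) \<and>
      eta > 0 \<and> a < b \<and> {a<..<b} \<subseteq> I \<and> I \<subseteq> {a..b} \<and> b - a = Q powr (- eta) \<and>
      I \<subseteq> {-1/2<..<1/2} \<and>
      (\<forall>x\<in>I. \<bar>poly (map_poly real_of_int P1) x\<bar> \<le> Q powr (- tau1) \<and>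
               \<bar>poly (map_poly real_of_int P2) x\<bar> \<le> Q powr (- tau2)) \<and>
      Q > Q0
      \<longrightarrow> 3 * min (tau1 + lam1) (tau2 + lam2) - 2 * eta
            < real n1 * lam2 + real n2 * lam1 + \<delta>"
    proof (intro exI[of _ "max 1 (C powr (1 / \<delta>))"] allI impI)
      fix n1 n2 :: nat and lam1 lam2 Q :: real and P1 P2 :: "int poly" and tau1 tau2 eta :: real
        and I :: "real set" and a b :: real
      assume H: "n1 \<ge> 1 \<and> n2 \<ge> 1 \<and> n1 + n2 \<le> n \<and> n1 + n2 \<ge> 3 \<and> lam1 \<ge> 0 \<and> lam2 \<ge> 0 \<and> Q \<ge> 1 \<and>
      degree P1 = n1 \<and> real_of_int (height P1) \<le> Q powr lam1 \<and>
      degree P2 = n2 \<and> real_of_int (height P2) \<le> Q powr lam2 \<and>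
      \<not> (\<exists>z::complex. poly (map_poly of_int P1) z = 0 \<and> poly (map_poly of_int P2) z = 0) \<and>
      eta > 0 \<and> a < b \<and> {a<..<b} \<subseteq> I \<and> I \<subseteq> {a..b} \<and> b - a = Q powr (- eta) \<and>
      I \<subseteq> {-1/2<..<1/2} \<and>
      (\<forall>x\<in>I. \<bar>poly (map_poly real_of_int P1) x\<bar> \<le> Q powr (- tau1) \<and>
               \<bar>poly (map_poly real_of_int P2) x\<bar> \<le> Q powr (- tau2)) \<and>
      Q > max 1 (C powr (1 / \<delta>))"
      define E where "E = real n1 * lam2 + real n2 * lam1 - 3 * min (tau1 + lam1) (tau2 + lam2) + 2 * eta"
      have Q1: "Q \<ge> 1" and QC: "Q > C powr (1 / \<delta>)" using H by auto
      have main: "1 \<le> C * Q powr E"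
      proof -
        from H have f: "n1 \<ge> 1" "n2 \<ge> 1" "n1 + n2 \<le> n" "n1 + n2 \<ge> 3" "Q \<ge> 1"
          "degree P1 = n1" "real_of_int (height P1) \<le> Q powr lam1"
          "degree P2 = n2" "real_of_int (height P2) \<le> Q powr lam2"
          "\<not> (\<exists>z::complex. poly (of_int_poly P1) z = 0 \<and> poly (of_int_poly P2) z = 0)"
          "eta > 0" "a < b" "{a<..<b} \<subseteq> I" "b - a = Q powr (- eta)" "I \<subseteq> {-1/2<..<1/2}"
          "\<forall>x\<in>I. \<bar>poly (of_int_poly P1) x\<bar> \<le> Q powr (- tau1) \<and> \<bar>poly (of_int_poly P2) x\<bar> \<le> Q powr (- tau2)"
          by auto
        show ?thesis unfolding C_def K_def E_def
          by (rule part_b[OF f(1) f(2) f(3) f(4) f(5) f(6) f(7) f(8) f(9) f(10) f(11) f(12) f(13) f(14) f(15) f(16)])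
      qed
      show "3 * min (tau1 + lam1) (tau2 + lam2) - 2 * eta < real n1 * lam2 + real n2 * lam1 + \<delta>"
      proof (rule ccontr)
        assume "\<not> ?thesis"
        hence "E \<le> - \<delta>" unfolding E_def by simp
        hence "Q powr E \<le> Q powr (- \<delta>)" using Q1 by (rule powr_mono)
        hence "1 \<le> C * Q powr (- \<delta>)" using main C0 by (smt (verit) mult_left_mono)
        hence "Q powr \<delta> \<le> C" using Q1 by (simp add: powr_minus field_simps)
        moreover have "C = (C powr (1 / \<delta>)) powr \<delta>" using C0 d by (simp add: powr_powr)
        moreover have "(C powr (1 / \<delta>)) powr \<delta> < Q powr \<delta>"
          using QC d by (intro powr_less_mono2) auto
        ultimately show False by simp
      qed
    qed
  qed
qed

end
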